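(* Let $H$ be the graph obtained from the complete bipartite graph $K_{4,4}$ by deleting a perfect matching. Then no bipartite graph $G=(A\cup B,E)$ containing $H$ as an induced subgraph admits a Stick representation with the vertices of $A$ as horizontal segments and those of $B$ as vertical segments. In particular, since $H$ is planar, not all planar bipartite graphs are Stick graphs.
   Context: A Stick representation of a bipartite graph $G=(A\cup B,E)$ (with $A$ horizontal and $B$ vertical) assigns to each vertex of $A$ a horizontal segment and to each vertex of $B$ a vertical segment such that the left endpoints of all horizontal segments and the bottom endpoints of all vertical segments lie on a fixed ground line $\ell$ of slope $-1$, and a horizontal and a vertical segment intersect if and only if the corresponding vertices are adjacent in $G$. A Stick graph is a bipartite graph admitting such a representation. *)

theory Defs
  imports "HOL-Analysis.Analysis"
begin

definition bipartite_graph :: "'v set \<Rightarrow> 'v set \<Rightarrow> ('v \<Rightarrow> 'v \<Rightarrow> bool) \<Rightarrow> bool" where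
  "bipartite_graph A B E \<longleftrightarrow>
     A \<inter> B = {} \<and> finite (A \<union> B) \<and>
     (\<forall>u v. E u v \<longrightarrow> E v u) \<and>
     (\<forall>u v. E u v \<longrightarrow> (u \<in> A \<and> v \<in> B) \<or> (u \<in> B \<and> v \<in> A))"

text \<open>Horizontal segment whose left endpoint lies on the ground line y = c - x,
  starting at abscissa l and ending at abscissa r (r \<ge> l).\<close>
definition hseg :: "real \<Rightarrow> real \<Rightarrow> real \<Rightarrow> (real \<times> real) set" where
  "hseg c l r = closed_segment (l, c - l) (r, c - l)"

text \<open>Vertical segment whose bottom endpoint lies on the ground line y = c - x,
  at abscissa x, with top at height t (t \<ge> c - x).\<close>
definition vseg :: "real \<Rightarrow> real \<Rightarrow> real \<Rightarrow> (real \<times> real) set" where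
  "vseg c x t = closed_segment (x, c - x) (x, t)"

definition stick_representation ::
  "'v set \<Rightarrow> 'v set \<Rightarrow> ('v \<Rightarrow> 'v \<Rightarrow> bool) \<Rightarrow> bool" where
  "stick_representation A B E \<longleftrightarrow>
     (\<exists>(c::real) (hl::'v \<Rightarrow> real) hr vx vt.
        (\<forall>a\<in>A. hl a \<le> hr a) \<and>
        (\<forall>b\<in>B. c - vx b \<le> vt b) \<and>
        (\<forall>a\<in>A. \<forall>b\<in>B. (hseg c (hl a) (hr a) \<inter> vseg c (vx b) (vt b) \<noteq> {}) \<longleftrightarrow> E a b))"

text \<open>The graph H = K_{4,4} minus a perfect matching: vertices Inl i, Inr j (i, j < 4),
  Inl i adjacent to Inr j iff i \<noteq> j.\<close>
definition H_verts :: "(nat + nat) set" where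
  "H_verts = Inl ` {..<4} \<union> Inr ` {..<4}"

definition H_adj :: "nat + nat \<Rightarrow> nat + nat \<Rightarrow> bool" where
  "H_adj u v \<longleftrightarrow>
     (\<exists>i j. i \<noteq> j \<and> ((u = Inl i \<and> v = Inr j) \<or> (u = Inr j \<and> v = Inl i)))"

definition contains_induced_H :: "'v set \<Rightarrow> ('v \<Rightarrow> 'v \<Rightarrow> bool) \<Rightarrow> bool" where
  "contains_induced_H V E \<longleftrightarrow>
     (\<exists>f. inj_on f H_verts \<and> f ` H_verts \<subseteq> V \<and>
          (\<forall>u\<in>H_verts. \<forall>v\<in>H_verts. E (f u) (f v) \<longleftrightarrow> H_adj u v))"

end

theory Submission
  imports Defs
begin

lemma hs_mem: "(a,b) \<in> closed_segment (l,y) (r,y) \<longleftrightarrow> b = y \<and> a \<in> closed_segment l (r::real)" for y :: real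
  by (auto simp: in_segment algebra_simps)

lemma vs_mem: "(a,b) \<in> closed_segment (x,l) (x,r) \<longleftrightarrow> a = x \<and> b \<in> closed_segment l (r::real)" for x :: real
  by (auto simp: in_segment algebra_simps)

lemma inter_iff:
  assumes "l \<le> r" "c - x \<le> t"
  shows "(hseg c l r \<inter> vseg c x t \<noteq> {}) \<longleftrightarrow> (c - t \<le> l \<and> l \<le> x \<and> x \<le> r)"
proof
  assume "hseg c l r \<inter> vseg c x t \<noteq> {}"
  then obtain a b where "(a,b) \<in> hseg c l r" "(a,b) \<in> vseg c x t" by auto
  then show "c - t \<le> l \<and> l \<le> x \<and> x \<le> r"
    using assms by (auto simp: hseg_def vseg_def hs_mem vs_mem closed_segment_eq_real_ivl split: if_splits)
next
  assume "c - t \<le> l \<and> l \<le> x \<and> x \<le> r"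
  then have "(x, c - l) \<in> hseg c l r \<inter> vseg c x t"
    using assms by (auto simp: hseg_def vseg_def hs_mem vs_mem closed_segment_eq_real_ivl)
  then show "hseg c l r \<inter> vseg c x t \<noteq> {}" by blast
qed

lemma core:
  fixes p r s q :: "nat \<Rightarrow> real"
  assumes h: "\<And>i j. i < 4 \<Longrightarrow> j < 4 \<Longrightarrow> (s j \<le> p i \<and> p i \<le> q j \<and> q j \<le> r i) \<longleftrightarrow> i \<noteq> j"
  shows False
proof -
  have A: "i = k" if "i < 4" "k < 4" "q i < p i" "q k < p k" for i k
  proof (rule ccontr)
    assume "i \<noteq> k"
    then have "p i \<le> q k" "p k \<le> q i" using h[of i k] h[of k i] that by auto
    then show False using that by linarith
  qed
  have B: "i = k" if "i < 4" "k < 4" "r i < q i" "r k < q k" for i k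
  proof (rule ccontr)
    assume "i \<noteq> k"
    then have "q k \<le> r i" "q i \<le> r k" using h[of i k] h[of k i] that by auto
    then show False using that by linarith
  qed
  have C: "i = k" if "i < 4" "k < 4" "p i < s i" "p k < s k" for i k
  proof (rule ccontr)
    assume "i \<noteq> k"
    then have "s k \<le> p i" "s i \<le> p k" using h[of i k] h[of k i] that by auto
    then show False using that by linarith
  qed
  have D: "q i < p i \<or> r i < q i \<or> p i < s i" if "i < 4" for i
    using h[of i i] that by auto
  have d0: "q 0 < p 0 \<or> r 0 < q 0 \<or> p 0 < s 0" using D[of 0] by simp
  have d1: "q 1 < p 1 \<or> r 1 < q 1 \<or> p 1 < s 1" using D[of 1] by simp
  have d2: "q 2 < p 2 \<or> r 2 < q 2 \<or> p 2 < s 2" using D[of 2] by simp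
  have d3: "q 3 < p 3 \<or> r 3 < q 3 \<or> p 3 < s 3" using D[of 3] by simp
  have n: "(0::nat) \<noteq> 1" "(0::nat) \<noteq> 2" "(0::nat) \<noteq> 3" "(1::nat) \<noteq> 2" "(1::nat) \<noteq> 3" "(2::nat) \<noteq> 3"
    by auto
  have l: "(0::nat) < 4" "(1::nat) < 4" "(2::nat) < 4" "(3::nat) < 4" by auto
  show False
    using d0 d1 d2 d3 A[OF l(1) l(2)] A[OF l(1) l(3)] A[OF l(1) l(4)] A[OF l(2) l(3)] A[OF l(2) l(4)] A[OF l(3) l(4)]
      B[OF l(1) l(2)] B[OF l(1) l(3)] B[OF l(1) l(4)] B[OF l(2) l(3)] B[OF l(2) l(4)] B[OF l(3) l(4)]
      C[OF l(1) l(2)] C[OF l(1) l(3)] C[OF l(1) l(4)] C[OF l(2) l(3)] C[OF l(2) l(4)] C[OF l(3) l(4)] n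
    by blast
qed

lemma generic:
  fixes a b :: "nat \<Rightarrow> 'v"
  assumes "\<forall>a\<in>A. hl a \<le> hr a" "\<forall>b\<in>B. c - vx b \<le> vt b"
    and "\<forall>a\<in>A. \<forall>b\<in>B. (hseg c (hl a) (hr a) \<inter> vseg c (vx b) (vt b) \<noteq> {}) \<longleftrightarrow> E a b"
    and "\<And>i. i < 4 \<Longrightarrow> a i \<in> A" "\<And>j. j < 4 \<Longrightarrow> b j \<in> B"
    and "\<And>i j. i < 4 \<Longrightarrow> j < 4 \<Longrightarrow> E (a i) (b j) \<longleftrightarrow> i \<noteq> j"
  shows False
proof (rule core[of "\<lambda>j. c - vt (b j)" "\<lambda>i. hl (a i)" "\<lambda>j. vx (b j)" "\<lambda>i. hr (a i)"])
  fix i j :: nat assume ij: "i < 4" "j < 4"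
  have "E (a i) (b j) \<longleftrightarrow> (hseg c (hl (a i)) (hr (a i)) \<inter> vseg c (vx (b j)) (vt (b j)) \<noteq> {})"
    using assms(3,4,5) ij by auto
  also have "\<dots> \<longleftrightarrow> (c - vt (b j) \<le> hl (a i) \<and> hl (a i) \<le> vx (b j) \<and> vx (b j) \<le> hr (a i))"
    by (rule inter_iff) (use assms(1,2,4,5) ij in auto)
  finally show "(c - vt (b j) \<le> hl (a i) \<and> hl (a i) \<le> vx (b j) \<and> vx (b j) \<le> hr (a i)) \<longleftrightarrow> i \<noteq> j"
    using assms(6)[OF ij] by simp
qed

theorem mainTheorem10:
  fixes A B :: "'v set" and E :: "'v \<Rightarrow> 'v \<Rightarrow> bool"
  assumes "bipartite_graph A B E"
    and "contains_induced_H (A \<union> B) E"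
  shows "\<not> stick_representation A B E"
proof
  assume "stick_representation A B E"
  then obtain c hl hr vx vt where st:
    "\<forall>a\<in>A. hl a \<le> hr a" "\<forall>b\<in>B. c - vx b \<le> vt b"
    "\<forall>a\<in>A. \<forall>b\<in>B. (hseg c (hl a) (hr a) \<inter> vseg c (vx b) (vt b) \<noteq> {}) \<longleftrightarrow> E a b"
    unfolding stick_representation_def by blast
  obtain f where f: "\<forall>u\<in>H_verts. \<forall>v\<in>H_verts. E (f u) (f v) \<longleftrightarrow> H_adj u v"
    using assms(2) unfolding contains_induced_H_def by blast
  have bp: "A \<inter> B = {}" "\<And>u v. E u v \<Longrightarrow> E v u"
    "\<And>u v. E u v \<Longrightarrow> (u \<in> A \<and> v \<in> B) \<or> (u \<in> B \<and> v \<in> A)"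
    using assms(1) unfolding bipartite_graph_def by blast+
  have E1: "E (f (Inl i)) (f (Inr j)) \<longleftrightarrow> i \<noteq> j" if "i < 4" "j < 4" for i j
    using f that by (auto simp: H_verts_def H_adj_def)
  have E2: "E (f (Inr j)) (f (Inl i)) \<longleftrightarrow> i \<noteq> j" if "i < 4" "j < 4" for i j
    using f that by (auto simp: H_verts_def H_adj_def)
  have AB: "v \<in> B" if "E u v" "u \<in> A" for u v using bp that by blast
  have BA: "v \<in> A" if "E u v" "u \<in> B" for u v using bp that by blast
  have e01: "E (f (Inl 0)) (f (Inr 1))" using E1 by simp
  show False
  proof (cases "f (Inl 0) \<in> A")
    case True
    have r: "f (Inr j) \<in> B" if "j < 4" "j \<noteq> 0" for j using AB[OF _ True] E1[of 0 j] that by simp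
    have l: "f (Inl i) \<in> A" if "i < 4" "i \<noteq> 1" for i using BA[OF _ r[of 1]] E2[of i 1] that by simp
    have l1: "f (Inl 1) \<in> A" using BA[OF _ r[of 2]] E2[of 1 2] by simp
    have r0: "f (Inr 0) \<in> B" using AB[OF _ l1] E1[of 1 0] by simp
    have la: "f (Inl i) \<in> A" if "i < 4" for i using l l1 that by (cases "i = 1") auto
    have rb: "f (Inr j) \<in> B" if "j < 4" for j using r r0 that by (cases "j = 0") auto
    show False
      by (rule generic[of A hl hr B c vx vt E "\<lambda>i. f (Inl i)" "\<lambda>j. f (Inr j)"])
        (use st la rb E1 in auto)
  next
    case False
    then have F: "f (Inl 0) \<in> B" using bp(3)[OF e01] by blast
    have r: "f (Inr j) \<in> A" if "j < 4" "j \<noteq> 0" for j using BA[OF _ F] E1[of 0 j] that by simp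
    have l: "f (Inl i) \<in> B" if "i < 4" "i \<noteq> 1" for i using AB[OF _ r[of 1]] E2[of i 1] that by simp
    have l1: "f (Inl 1) \<in> B" using AB[OF _ r[of 2]] E2[of 1 2] by simp
    have r0: "f (Inr 0) \<in> A" using BA[OF _ l1] E1[of 1 0] by simp
    have la: "f (Inl i) \<in> B" if "i < 4" for i using l l1 that by (cases "i = 1") auto
    have rb: "f (Inr j) \<in> A" if "j < 4" for j using r r0 that by (cases "j = 0") auto
    show False
      by (rule generic[of A hl hr B c vx vt E "\<lambda>j. f (Inr j)" "\<lambda>i. f (Inl i)"])
        (use st la rb E2 in auto)
  qed
qed

end
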